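(* Let $R$ be a (not necessarily unital) ring, or a (not necessarily unital) $K$-algebra. Then $R$ is locally unit-regular as a ring (respectively, as an algebra) if and only if $R$ is von Neumann regular and $eRe$ is unit-regular for every idempotent $e \in R$.
   Context: A ring $R$ is (von Neumann) regular if for each $x\in R$ there is $y\in R$ with $xyx=x$. A unital ring $S$ is unit-regular if for each $x\in S$ there is a unit $u$ of $S$ with $xux = x$. A ring (resp. $K$-algebra) $R$ is locally unit-regular if every finite subset of $R$ is contained in a subring (resp. $K$-subalgebra) of $R$ that has its own identity element (not necessarily equal to any identity of $R$) and is unit-regular. *)

theory Defs
  imports Complex_Main
begin

text \<open>The (not necessarily unital) ring R is the whole carrier type of class ring.\<close>

definition vn_regular :: "'a::ring itself \<Rightarrow> bool" where
  "vn_regular _ \<longleftrightarrow> (\<forall>x::'a. \<exists>y. x * y * x = x)"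

definition unit_regular_on :: "'a::ring set \<Rightarrow> 'a \<Rightarrow> bool" where
  "unit_regular_on S u \<longleftrightarrow>
     (\<forall>x\<in>S. \<exists>v\<in>S. \<exists>w\<in>S. v * w = u \<and> w * v = u \<and> x * v * x = x)"

definition unital_subring :: "'a::ring set \<Rightarrow> 'a \<Rightarrow> bool" where
  "unital_subring S u \<longleftrightarrow>
     0 \<in> S \<and> (\<forall>x\<in>S. \<forall>y\<in>S. x + y \<in> S \<and> x * y \<in> S) \<and> (\<forall>x\<in>S. - x \<in> S) \<and>
     u \<in> S \<and> (\<forall>x\<in>S. u * x = x \<and> x * u = x)"

definition locally_unit_regular :: "'a::ring itself \<Rightarrow> bool" where
  "locally_unit_regular _ \<longleftrightarrow>
     (\<forall>F::'a set. finite F \<longrightarrow>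
        (\<exists>S u. F \<subseteq> S \<and> unital_subring S u \<and> unit_regular_on S u))"

definition algebra_over :: "('k::field \<Rightarrow> 'a::ring \<Rightarrow> 'a) \<Rightarrow> bool" where
  "algebra_over scale \<longleftrightarrow> Modules.module scale \<and>
     (\<forall>c x y. scale c (x * y) = scale c x * y \<and> scale c (x * y) = x * scale c y)"

definition locally_unit_regular_alg :: "('k::field \<Rightarrow> 'a::ring \<Rightarrow> 'a) \<Rightarrow> bool" where
  "locally_unit_regular_alg scale \<longleftrightarrow>
     (\<forall>F::'a set. finite F \<longrightarrow>
        (\<exists>S u. F \<subseteq> S \<and> unital_subring S u \<and> (\<forall>c. \<forall>x\<in>S. scale c x \<in> S) \<and>
               unit_regular_on S u))"

definition corner :: "'a::ring \<Rightarrow> 'a set" where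
  "corner e = {e * r * e | r. True}"

end

theory Submission imports Defs begin

lemma ext_left:
  fixes e x :: "'a::ring"
  assumes vn: "\<forall>z::'a. \<exists>y. z*y*z = z" and ee: "e*e = e"
  shows "\<exists>e1. e1*e1=e1 \<and> e1*e=e \<and> e*e1=e \<and> e1*x=x"
proof -
  define z where "z = x - e*x"
  obtain z' where zz: "z*z'*z = z" using vn by blast
  define p where "p = z*z'"
  have ee': "\<And>w. e*(e*w) = e*w" using ee by (metis mult.assoc)
  have ez: "e*z = 0" unfolding z_def by (simp add: algebra_simps ee')
  have ep: "e*p = 0" unfolding p_def by (metis ez mult.assoc mult_zero_left)
  have ep': "\<And>w. e*(p*w) = 0" using ep by (metis mult.assoc mult_zero_left)
  have pz: "p*z = z" using zz p_def by simp
  have pp: "p*p = p" unfolding p_def by (metis zz mult.assoc)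
  have pp': "\<And>w. p*(p*w) = p*w" using pp by (metis mult.assoc)
  define e1 where "e1 = e + (p - p*e)"
  have "e1*e1=e1" unfolding e1_def by (simp add: algebra_simps ee ee' ep ep' pp pp')
  moreover have "e1*e=e" unfolding e1_def by (simp add: algebra_simps ee ee' ep ep' pp pp')
  moreover have "e*e1=e" unfolding e1_def by (simp add: algebra_simps ee ee' ep ep' pp pp')
  moreover have "e1*x=x"
  proof -
    have px: "p*x = z + p*(e*x)" using pz unfolding z_def by (simp add: algebra_simps)
    show ?thesis unfolding e1_def by (simp add: algebra_simps px ee' ep') (simp add: z_def)
  qed
  ultimately show ?thesis by blast
qed

lemma ext_right:
  fixes e x :: "'a::ring"
  assumes vn: "\<forall>z::'a. \<exists>y. z*y*z = z" and ee: "e*e = e"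
  shows "\<exists>e1. e1*e1=e1 \<and> e1*e=e \<and> e*e1=e \<and> x*e1=x"
proof -
  define z where "z = x - x*e"
  obtain z' where zz: "z*z'*z = z" using vn by blast
  define p where "p = z'*z"
  have ee': "\<And>w. e*(e*w) = e*w" using ee by (metis mult.assoc)
  have ez: "z*e = 0" unfolding z_def by (simp add: algebra_simps ee)
  have ep: "p*e = 0" unfolding p_def by (simp add: mult.assoc ez)
  have ep': "\<And>w. p*(e*w) = 0" using ep by (metis mult.assoc mult_zero_left)
  have pz: "z*p = z" using zz p_def by (simp add: mult.assoc)
  have pp: "p*p = p" unfolding p_def by (metis zz mult.assoc)
  have pp': "\<And>w. p*(p*w) = p*w" using pp by (metis mult.assoc)
  define e1 where "e1 = e + (p - e*p)"
  have "e1*e1=e1" unfolding e1_def by (simp add: algebra_simps ee ee' ep ep' pp pp')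
  moreover have "e1*e=e" unfolding e1_def by (simp add: algebra_simps ee ee' ep ep' pp pp')
  moreover have "e*e1=e" unfolding e1_def by (simp add: algebra_simps ee ee' ep ep' pp pp')
  moreover have "x*e1=x"
  proof -
    have px: "x*p = z + x*(e*p)" using pz unfolding z_def by (simp add: algebra_simps)
    show ?thesis unfolding e1_def by (simp add: algebra_simps px ee' ep') (simp add: z_def)
  qed
  ultimately show ?thesis by blast
qed

lemma local_unit:
  fixes F :: "'a::ring set"
  assumes vn: "\<forall>z::'a. \<exists>y. z*y*z = z" and fin: "finite F"
  shows "\<exists>e. e*e = e \<and> (\<forall>x\<in>F. e*x = x \<and> x*e = x)"
  using fin
proof (induction F rule: finite_induct)
  case empty
  then show ?case by (intro exI[of _ 0]) simp
next
  case (insert x F)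
  then obtain e where ee: "e*e=e" and eF: "\<forall>y\<in>F. e*y = y \<and> y*e = y" by blast
  obtain e1 where e1: "e1*e1=e1" "e1*e=e" "e*e1=e" "e1*x=x" using ext_left[OF vn ee] by blast
  obtain e2 where e2: "e2*e2=e2" "e2*e1=e1" "e1*e2=e1" "x*e2=x" using ext_right[OF vn e1(1)] by blast
  have a: "e2*e = e" by (metis e1(2) e2(2) mult.assoc)
  have b: "e*e2 = e" by (metis e1(3) e2(3) mult.assoc)
  have c: "e2*x = x" by (metis e1(4) e2(2) mult.assoc)
  have "\<forall>y\<in>F. e2*y = y \<and> y*e2 = y" using eF a b by (metis mult.assoc)
  then show ?case using e2 c by auto
qed

lemma compose_eq:
  fixes a b c d P Q R :: "'a::ring"
  assumes "a*b = P" "b*a = Q" "c*d = Q" "d*c = R" "P*P = P" "R*R = R"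
  shows "(a*c)*(d*b) = P \<and> (d*b)*(a*c) = R"
proof
  have "(a*c)*(d*b) = a*(c*d)*b" by (simp add: mult.assoc)
  also have "\<dots> = (a*b)*(a*b)" using assms by (metis mult.assoc)
  finally show "(a*c)*(d*b) = P" using assms by simp
  have "(d*b)*(a*c) = d*(b*a)*c" by (simp add: mult.assoc)
  also have "\<dots> = (d*c)*(d*c)" using assms by (metis mult.assoc)
  finally show "(d*b)*(a*c) = R" using assms by simp
qed

lemma equiv_compl:
  fixes u a b t s p q :: "'a::ring"
  assumes uu: "u*u = u" and ua: "u*a = a" "a*u = a" and ub: "u*b = b" "b*u = b"
    and ut: "u*t = t" "t*u = t" and us: "u*s = s" "s*u = s"
    and ab: "a*b = p" and ba: "b*a = q" and pa: "p*a = a" and aq: "a*q = a"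
    and ts: "t*s = u" and st: "s*t = u" and ata: "a*t*a = a"
  shows "\<exists>A B. A*B = u - p \<and> B*A = u - q"
proof -
  have ata': "\<And>w. a*(t*(a*w)) = a*w" using ata by (metis mult.assoc)
  have ts': "\<And>w. t*(s*w) = u*w" using ts by (metis mult.assoc)
  have st': "\<And>w. s*(t*w) = u*w" using st by (metis mult.assoc)
  have ua': "\<And>w. u*(a*w) = a*w" using ua by (metis mult.assoc)
  have ub': "\<And>w. u*(b*w) = b*w" using ub by (metis mult.assoc)
  have ut': "\<And>w. u*(t*w) = t*w" using ut by (metis mult.assoc)
  have us': "\<And>w. u*(s*w) = s*w" using us by (metis mult.assoc)
  have uu': "\<And>w. u*(u*w) = u*w" using uu by (metis mult.assoc)
  have ab': "\<And>w. a*(b*w) = p*w" using ab by (metis mult.assoc)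
  have ba': "\<And>w. b*(a*w) = q*w" using ba by (metis mult.assoc)
  have pa': "\<And>w. p*(a*w) = a*w" using pa by (metis mult.assoc)
  have aq': "\<And>w. a*(q*w) = a*w" using aq by (metis mult.assoc)
  have pp: "p*p = p" using ab pa by (metis mult.assoc)
  have qq: "q*q = q" using ba aq by (metis mult.assoc)
  have up: "u*p = p" "p*u = p" using ab ua ub by (metis mult.assoc)+
  have uq: "u*q = q" "q*u = q" using ba ua ub by (metis mult.assoc)+
  have up': "\<And>w. u*(p*w) = p*w" using up by (metis mult.assoc)
  have uq': "\<And>w. u*(q*w) = q*w" using uq by (metis mult.assoc)
  note S = algebra_simps uu ua ub ut us up uq ata ts st ata' ts' st' ua' ub' ut' us' uu' up' uq'
  define E where "E = u - a*t"
  define F where "F = u - t*a"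
  have atp: "a*(t*p) = p" using ab by (metis ata mult.assoc)
  have qta: "q*(t*a) = q" using ba by (metis ata mult.assoc)
  have P1: "(u-p)*E = u - p" unfolding E_def by (simp add: S pa' atp)
  have P2: "E*(u-p) = E" unfolding E_def by (simp add: S pa' atp)
  have EE: "E*E = E" unfolding E_def by (simp add: S)
  have tata: "t*(a*(t*a)) = t*a" using ata by (metis mult.assoc)
  have FF: "F*F = F" unfolding F_def by (simp add: S tata)
  have Es: "E*s = s*F" unfolding E_def F_def by (simp add: S)
  have tE: "t*E = F*t" unfolding E_def F_def by (simp add: S)
  have Eu: "E*u = E" "u*E = E" unfolding E_def by (simp_all add: S)
  have Fu: "F*u = F" "u*F = F" unfolding F_def by (simp_all add: S)
  have al: "(E*s)*(t*E) = E"
  proof -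
    have "(E*s)*(t*E) = E*(s*t)*E" by (simp add: mult.assoc)
    then show ?thesis using st Eu EE by simp
  qed
  have be: "(t*E)*(E*s) = F"
  proof -
    have "(t*E)*(E*s) = t*(E*E)*s" by (simp add: mult.assoc)
    also have "\<dots> = t*(s*F)" using EE Es by (simp add: mult.assoc)
    also have "\<dots> = F" using ts Fu by (simp flip: mult.assoc)
    finally show ?thesis .
  qed
  have upp: "(u-p)*(u-p) = u-p" by (simp add: S pp)
  have uqq: "(u-q)*(u-q) = u-q" by (simp add: S qq)
  obtain A1 B1 where A1: "A1*B1 = u-p" "B1*A1 = F"
    using compose_eq[OF P1 P2 al be upp FF] by blast
  have P3: "(u-q)*(u-t*a) = F" unfolding F_def by (simp add: S qta aq' aq)
  have P4: "(u-t*a)*(u-q) = u-q" by (simp add: S qta aq' aq)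
  show ?thesis using compose_eq[OF A1 P3 P4 upp uqq] by blast
qed
lemma corner_ur:
  fixes S :: "'a::ring set"
  assumes us: "unital_subring S u" and ur: "unit_regular_on S u"
    and eS: "e\<in>S" and ee: "e*e=e" and xS: "x\<in>S" and ex: "e*x=x" and xe: "x*e=x"
  shows "\<exists>v\<in>corner e. \<exists>w\<in>corner e. v*w=e \<and> w*v=e \<and> x*v*x=x"
proof -
  have cl: "\<And>a b. a\<in>S \<Longrightarrow> b\<in>S \<Longrightarrow> a+b\<in>S \<and> a*b\<in>S" and ng: "\<And>a. a\<in>S \<Longrightarrow> -a\<in>S"
    and uS: "u\<in>S" and uid: "\<And>a. a\<in>S \<Longrightarrow> u*a = a \<and> a*u = a"
    using us unfolding unital_subring_def by blast+
  have df: "\<And>a b. a\<in>S \<Longrightarrow> b\<in>S \<Longrightarrow> a-b\<in>S" using cl ng by (metis diff_conv_add_uminus)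
  obtain q0 where q0: "q0\<in>S" "x*q0*x = x" using ur xS unfolding unit_regular_on_def by blast
  define y1 where "y1 = e*q0*e"
  have y1S: "y1\<in>S" unfolding y1_def using cl eS q0 by blast
  have xy1x: "x*y1*x = x" unfolding y1_def using q0 ex xe by (metis mult.assoc)
  define y where "y = y1*x*y1"
  have yS: "y\<in>S" unfolding y_def using cl y1S xS by blast
  have ey: "e*y = y" unfolding y_def y1_def using ee by (metis mult.assoc)
  have ye: "y*e = y" unfolding y_def y1_def using ee by (metis mult.assoc)
  have xyx: "x*y*x = x" unfolding y_def using xy1x by (metis mult.assoc)
  have yxy: "y*x*y = y" unfolding y_def using xy1x by (metis mult.assoc)
  define a where "a = (u-e)+x"
  define b where "b = (u-e)+y"
  define p where "p = (u-e)+x*y"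
  define q where "q = (u-e)+y*x"
  have aS: "a\<in>S" unfolding a_def using cl df uS eS xS by blast
  obtain t where tS: "t\<in>S" and t: "\<exists>s\<in>S. t*s = u \<and> s*t = u \<and> a*t*a = a"
    using ur aS unfolding unit_regular_on_def by blast
  then obtain s where sS: "s\<in>S" and ts: "t*s = u" "s*t = u" and ata: "a*t*a = a" by blast
  have ue: "u*e = e" "e*u = e" using uid eS by auto
  have ux: "u*x = x" "x*u = x" using uid xS by auto
  have uy: "u*y = y" "y*u = y" using uid yS by auto
  have uu: "u*u = u" using uid uS by auto
  have ee': "\<And>w. e*(e*w) = e*w" using ee by (metis mult.assoc)
  have ex': "\<And>w. e*(x*w) = x*w" using ex by (metis mult.assoc)
  have ey': "\<And>w. e*(y*w) = y*w" using ey by (metis mult.assoc)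
  have xe': "\<And>w. x*(e*w) = x*w" using xe by (metis mult.assoc)
  have ye': "\<And>w. y*(e*w) = y*w" using ye by (metis mult.assoc)
  have ue': "\<And>w. u*(e*w) = e*w" "\<And>w. e*(u*w) = e*w" using ue by (metis mult.assoc)+
  have ux': "\<And>w. u*(x*w) = x*w" "\<And>w. x*(u*w) = x*w" using ux by (metis mult.assoc)+
  have uy': "\<And>w. u*(y*w) = y*w" "\<And>w. y*(u*w) = y*w" using uy by (metis mult.assoc)+
  have uu': "\<And>w. u*(u*w) = u*w" using uu by (metis mult.assoc)
  have xyx': "\<And>w. x*(y*(x*w)) = x*w" using xyx by (metis mult.assoc)
  have yxy': "\<And>w. y*(x*(y*w)) = y*w" using yxy by (metis mult.assoc)
  have xyx2: "x*(y*x) = x" "y*(x*y) = y" using xyx yxy by (simp_all add: mult.assoc)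
  note SS = algebra_simps xyx2 ee ex ey xe ye ue ux uy uu ee' ex' ey' xe' ye' ue' ux' uy' uu' xyx yxy xyx' yxy'
  have "\<exists>A B. A*B = u - p \<and> B*A = u - q"
  proof (rule equiv_compl[where a=a and b=b and t=t and s=s])
    show "u*u=u" by (rule uu)
    show "u*a=a" "a*u=a" unfolding a_def by (simp_all add: SS)
    show "u*b=b" "b*u=b" unfolding b_def by (simp_all add: SS)
    show "u*t=t" "t*u=t" using uid tS by auto
    show "u*s=s" "s*u=s" using uid sS by auto
    show "a*b=p" unfolding a_def b_def p_def by (simp add: SS)
    show "b*a=q" unfolding a_def b_def q_def by (simp add: SS)
    show "p*a=a" unfolding a_def p_def by (simp add: SS)
    show "a*q=a" unfolding a_def q_def by (simp add: SS)
  qed (use ts ata in auto)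
  then obtain A B where AB: "A*B = e - x*y" "B*A = e - y*x" unfolding p_def q_def
    by (auto simp: algebra_simps)
  define f where "f = e - x*y"
  define g where "g = e - y*x"
  have ff: "f*f = f" unfolding f_def by (simp add: SS)
  have gg: "g*g = g" unfolding g_def by (simp add: SS)
  have fx: "f*x = 0" "y*f = 0" unfolding f_def by (simp_all add: SS)
  have gy: "g*y = 0" "x*g = 0" unfolding g_def by (simp_all add: SS)
  have fe: "e*f = f" "f*e = f" unfolding f_def by (simp_all add: SS)
  have ge: "e*g = g" "g*e = g" unfolding g_def by (simp_all add: SS)
  define A' where "A' = f*A*g"
  define B' where "B' = g*B*f"
  have AB': "A*B = f" "B*A = g" using AB f_def g_def by simp_all
  have A'B': "A'*B' = f"
  proof -
    have "A'*B' = f*(A*(g*g)*B)*f" unfolding A'_def B'_def by (simp add: mult.assoc)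
    also have "\<dots> = f*(A*g*B)*f" by (simp only: gg)
    also have "\<dots> = f*(A*(B*A)*B)*f" by (simp only: AB'(2))
    also have "\<dots> = (f*(A*B))*((A*B)*f)" by (simp add: mult.assoc)
    also have "\<dots> = f" by (simp only: AB'(1) ff)
    finally show ?thesis .
  qed
  have B'A': "B'*A' = g"
  proof -
    have "B'*A' = g*(B*(f*f)*A)*g" unfolding A'_def B'_def by (simp add: mult.assoc)
    also have "\<dots> = g*(B*f*A)*g" by (simp only: ff)
    also have "\<dots> = g*(B*(A*B)*A)*g" by (simp only: AB'(1))
    also have "\<dots> = (g*(B*A))*((B*A)*g)" by (simp add: mult.assoc)
    also have "\<dots> = g" by (simp only: AB'(2) gg)
    finally show ?thesis .
  qed
  define v where "v = y + B'"
  define w where "w = x + A'"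
  have fx': "\<And>z. f*(x*z) = 0" "\<And>z. y*(f*z) = 0" using fx by (metis mult.assoc mult_zero_left)+
  have gy': "\<And>z. g*(y*z) = 0" "\<And>z. x*(g*z) = 0" using gy by (metis mult.assoc mult_zero_left)+
  have vw: "v*w = e"
  proof -
    have "v*w = y*x + y*A' + B'*x + B'*A'" unfolding v_def w_def by (simp add: algebra_simps)
    also have "y*A' = 0" unfolding A'_def using fx fx' by (simp add: mult.assoc)
    also have "B'*x = 0" unfolding B'_def using fx fx' by (simp add: mult.assoc)
    finally show ?thesis using B'A' by (simp add: g_def)
  qed
  have wv: "w*v = e"
  proof -
    have "w*v = x*y + x*B' + A'*y + A'*B'" unfolding v_def w_def by (simp add: algebra_simps)
    also have "x*B' = 0" unfolding B'_def using gy gy' by (simp add: mult.assoc)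
    also have "A'*y = 0" unfolding A'_def using gy gy' by (simp add: mult.assoc)
    finally show ?thesis using A'B' by (simp add: f_def)
  qed
  have xvx: "x*v*x = x"
  proof -
    have "x*v*x = x*y*x + x*B'*x" unfolding v_def by (simp add: algebra_simps)
    also have "x*B'*x = 0" unfolding B'_def using gy gy' by (simp add: mult.assoc)
    finally show ?thesis using xyx by simp
  qed
  have ve: "e*v*e = v" unfolding v_def B'_def using fe ge ey ye
    by (simp add: algebra_simps) (metis mult.assoc)
  have we: "e*w*e = w" unfolding w_def A'_def using fe ge ex xe
    by (simp add: algebra_simps) (metis mult.assoc)
  have "v \<in> corner e" "w \<in> corner e" unfolding corner_def using ve we by (metis (mono_tags) mem_Collect_eq)+
  then show ?thesis using vw wv xvx by blast
qed


lemma from_local: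
  fixes P :: "'a::ring set \<Rightarrow> bool"
  assumes H: "\<forall>F::'a set. finite F \<longrightarrow> (\<exists>S u. F \<subseteq> S \<and> unital_subring S u \<and> P S \<and> unit_regular_on S u)"
  shows "vn_regular TYPE('a) \<and> (\<forall>e::'a. e * e = e \<longrightarrow> unit_regular_on (corner e) e)"
proof
  show "vn_regular TYPE('a)" unfolding vn_regular_def
  proof
    fix x :: 'a
    obtain S u where "{x} \<subseteq> S" "unit_regular_on S u" using H[rule_format, of "{x}"] by auto
    then show "\<exists>y. x*y*x = x" unfolding unit_regular_on_def by blast
  qed
  show "\<forall>e::'a. e * e = e \<longrightarrow> unit_regular_on (corner e) e"
  proof (intro allI impI)
    fix e :: 'a assume ee: "e*e = e"
    show "unit_regular_on (corner e) e" unfolding unit_regular_on_def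
    proof
      fix x assume "x \<in> corner e"
      then obtain r where xr: "x = e*r*e" unfolding corner_def by blast
      have ex: "e*x = x" "x*e = x" unfolding xr using ee by (metis mult.assoc)+
      obtain S u where "{e,x} \<subseteq> S" "unital_subring S u" "unit_regular_on S u"
        using H[rule_format, of "{e,x}"] by auto
      then show "\<exists>v\<in>corner e. \<exists>w\<in>corner e. v * w = e \<and> w * v = e \<and> x * v * x = x"
        using corner_ur[of S u e x] ee ex by auto
    qed
  qed
qed

lemma corner_sub:
  fixes e :: "'a::ring"
  assumes ee: "e*e = e"
  shows "unital_subring (corner e) e"
  unfolding unital_subring_def corner_def
proof (intro conjI ballI)
  show "0 \<in> {e*r*e |r. True}" by (metis (mono_tags) mem_Collect_eq mult_zero_left mult_zero_right)
  show "e \<in> {e*r*e |r. True}" using ee by (metis (mono_tags) mem_Collect_eq)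
  fix x assume "x \<in> {e*r*e |r. True}"
  then obtain r where xr: "x = e*r*e" by blast
  show "e*x = x" "x*e = x" unfolding xr using ee by (metis mult.assoc)+
  show "-x \<in> {e*r*e |r. True}" unfolding xr
    by (rule CollectI, rule exI[of _ "-r"]) simp
  fix y assume "y \<in> {e*r*e |r. True}"
  then obtain r' where yr: "y = e*r'*e" by blast
  show "x+y \<in> {e*r*e |r. True}" unfolding xr yr
    by (rule CollectI, rule exI[of _ "r+r'"]) (simp add: algebra_simps)
  show "x*y \<in> {e*r*e |r. True}" unfolding xr yr
    by (rule CollectI, rule exI[of _ "r*e*e*r'"]) (simp add: mult.assoc)
qed

lemma to_local:
  fixes P :: "'a::ring set \<Rightarrow> bool"
  assumes vn: "vn_regular TYPE('a)" and cr: "\<forall>e::'a. e * e = e \<longrightarrow> unit_regular_on (corner e) e"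
    and PP: "\<And>e. e*e = e \<Longrightarrow> P (corner e)"
  shows "\<forall>F::'a set. finite F \<longrightarrow> (\<exists>S u. F \<subseteq> S \<and> unital_subring S u \<and> P S \<and> unit_regular_on S u)"
proof (intro allI impI)
  fix F :: "'a set" assume "finite F"
  then obtain e where ee: "e*e = e" and eF: "\<forall>x\<in>F. e*x = x \<and> x*e = x"
    using local_unit[of F] vn unfolding vn_regular_def by blast
  have "F \<subseteq> corner e"
  proof
    fix x assume "x \<in> F"
    then have "x = e*x*e" using eF by metis
    then show "x \<in> corner e" unfolding corner_def by blast
  qed
  then show "\<exists>S u. F \<subseteq> S \<and> unital_subring S u \<and> P S \<and> unit_regular_on S u"
    using corner_sub[OF ee] PP[OF ee] cr ee by blast
qed

theorem lemma5p1:
  fixes scale :: "'k::field \<Rightarrow> 'b::ring \<Rightarrow> 'b"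
  shows "(locally_unit_regular TYPE('a::ring) \<longleftrightarrow>
           vn_regular TYPE('a) \<and>
           (\<forall>e::'a. e * e = e \<longrightarrow> unit_regular_on (corner e) e))
       \<and> (algebra_over scale \<longrightarrow>
           (locally_unit_regular_alg scale \<longleftrightarrow>
             vn_regular TYPE('b) \<and>
             (\<forall>e::'b. e * e = e \<longrightarrow> unit_regular_on (corner e) e)))"
proof (intro conjI impI)
  show "locally_unit_regular TYPE('a::ring) \<longleftrightarrow>
           vn_regular TYPE('a) \<and> (\<forall>e::'a. e * e = e \<longrightarrow> unit_regular_on (corner e) e)"
  proof
    assume "locally_unit_regular TYPE('a)"
    then show "vn_regular TYPE('a) \<and> (\<forall>e::'a. e * e = e \<longrightarrow> unit_regular_on (corner e) e)"
      using from_local[of "\<lambda>_::'a set. True"] unfolding locally_unit_regular_def by simp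
  next
    assume "vn_regular TYPE('a) \<and> (\<forall>e::'a. e * e = e \<longrightarrow> unit_regular_on (corner e) e)"
    then show "locally_unit_regular TYPE('a)"
      using to_local[of "\<lambda>_::'a set. True"] unfolding locally_unit_regular_def by simp
  qed
  assume alg: "algebra_over scale"
  have sc: "\<forall>c. \<forall>x\<in>corner e. scale c x \<in> corner e" for e :: 'b
  proof (intro allI ballI)
    fix c x assume "x \<in> corner e"
    then obtain r where xr: "x = e*r*e" unfolding corner_def by blast
    have "scale c x = e * scale c r * e" unfolding xr using alg unfolding algebra_over_def by metis
    then show "scale c x \<in> corner e" unfolding corner_def by blast
  qed
  show "locally_unit_regular_alg scale \<longleftrightarrow>
             vn_regular TYPE('b) \<and> (\<forall>e::'b. e * e = e \<longrightarrow> unit_regular_on (corner e) e)"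
  proof
    assume "locally_unit_regular_alg scale"
    then show "vn_regular TYPE('b) \<and> (\<forall>e::'b. e * e = e \<longrightarrow> unit_regular_on (corner e) e)"
      using from_local[of "\<lambda>S. \<forall>c. \<forall>x\<in>S. scale c x \<in> S"] unfolding locally_unit_regular_alg_def by blast
  next
    assume "vn_regular TYPE('b) \<and> (\<forall>e::'b. e * e = e \<longrightarrow> unit_regular_on (corner e) e)"
    then show "locally_unit_regular_alg scale"
      using to_local[of "\<lambda>S. \<forall>c. \<forall>x\<in>S. scale c x \<in> S"] sc unfolding locally_unit_regular_alg_def by blast
  qed
qed

end
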